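(* Fix the parameters $S_1,\dots,S_{\mathcal K}$, $\lambda_1,\dots,\lambda_{\mathcal K}$ of the storage model in the context. Suppose that there exists a routing policy $P$ such that the shape process $\tilde X(t)$ with routing policy $P$ is recurrent. Then the linear system \[ \sum_{j=1}^{\kappa_i}\alpha_{ij}=\lambda_i\ (i=1,\dots,\mathcal K),\qquad \sum_{i=1}^{\mathcal K}\sum_{j=1}^{\kappa_i}\alpha_{ij}\,\delta_{\ell,s^i_j}=\tfrac1n\ (\ell=1,\dots,n) \] has a non-negative solution $(\alpha_{ij})$ (and hence there exists a routing policy, not depending on $x$, under which arrivals at all nodes are independent Poisson processes of common rate $1/n$).
   Context: Storage model: there are $n$ nodes $\{1,\dots,n\}$ and $\mathcal K\ge1$ non-empty neighborhoods $S_1,\dots,S_{\mathcal K}\subset\{1,\dots,n\}$ with $\bigcup_i S_i=\{1,\dots,n\}$; $\kappa_i=|S_i|$ and $S_i=\{s^i_1,\dots,s^i_{\kappa_i}\}$. Items arrive at $S_i$ as independent Poisson processes with rates $\lambda_i>0$, $\sum_{i=1}^{\mathcal K}\lambda_i=1$. Let $\Lambda_i=\{p\in\mathbb R^{\kappa_i}:p_j\ge0,\sum_j p_j=1\}$. A routing policy is a map $P:\mathbb N^n\to\Lambda_1\times\dots\times\Lambda_{\mathcal K}$ with $P(x+c\mathbf 1)=P(x)$ for all integers $c$; an item arriving at $S_i$ when the configuration is $x$ is stored at node $s^i_j$ with probability $p^{(i)}_j(x)$, independently for each arrival (the policy need not be local). $X(t)$ is the vector of node loads at time $t$, $M(t)=\frac1n\sum_iX_i(t)$,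 the shape is $\tilde X(t)=X(t)-M(t)\mathbf 1$, and $\tilde X^e(m)$ is the shape observed at successive arrival moments. With $\tau=\inf\{m>0:\tilde X^e(m)=0\}$, the process is called recurrent if $\mathbf P(\tau<\infty\mid\tilde X^e(0)=x)=1$ for every $x$. $\delta_{\ell,m}$ is the Kronecker delta. *)

theory Defs
  imports Complex_Main
begin

text \<open>Nodes are 1..n, neighbourhoods are indexed by i in 1..K;
  neighbourhood i has size kappa i and elements s i 1, ..., s i (kappa i)
  (pairwise distinct). lam i is the arrival rate at neighbourhood i.
  A configuration is a load vector x :: nat => nat, only the values on 1..n matter.\<close>

definition storage_model ::
  "nat \<Rightarrow> nat \<Rightarrow> (nat \<Rightarrow> nat) \<Rightarrow> (nat \<Rightarrow> nat \<Rightarrow> nat) \<Rightarrow> (nat \<Rightarrow> real) \<Rightarrow> bool" where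
  "storage_model n K kappa s lam \<longleftrightarrow>
     K \<ge> 1 \<and>
     (\<forall>i\<in>{1..K}. kappa i \<ge> 1) \<and>
     (\<forall>i\<in>{1..K}. \<forall>j\<in>{1..kappa i}. s i j \<in> {1..n}) \<and>
     (\<forall>i\<in>{1..K}. inj_on (s i) {1..kappa i}) \<and>
     (\<Union>i\<in>{1..K}. s i ` {1..kappa i}) = {1..n} \<and>
     (\<forall>i\<in>{1..K}. lam i > 0) \<and>
     (\<Sum>i=1..K. lam i) = 1"

text \<open>A routing policy: p x i j is the probability that an item arriving at
  neighbourhood i in configuration x is stored at node s i j.\<close>

definition routing_policy ::
  "nat \<Rightarrow> nat \<Rightarrow> (nat \<Rightarrow> nat) \<Rightarrow> ((nat \<Rightarrow> nat) \<Rightarrow> nat \<Rightarrow> nat \<Rightarrow> real) \<Rightarrow> bool" where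
  "routing_policy n K kappa p \<longleftrightarrow>
     (\<forall>x i. i \<in> {1..K} \<longrightarrow>
        (\<forall>j\<in>{1..kappa i}. p x i j \<ge> 0) \<and> (\<Sum>j=1..kappa i. p x i j) = 1) \<and>
     (\<forall>x y (c::int). (\<forall>l\<in>{1..n}. int (y l) = int (x l) + c) \<longrightarrow>
        (\<forall>i\<in>{1..K}. \<forall>j\<in>{1..kappa i}. p y i j = p x i j))"

definition mean_load :: "nat \<Rightarrow> (nat \<Rightarrow> nat) \<Rightarrow> real" where
  "mean_load n x = (\<Sum>l=1..n. real (x l)) / real n"

definition shape :: "nat \<Rightarrow> (nat \<Rightarrow> nat) \<Rightarrow> nat \<Rightarrow> real" where
  "shape n x l = real (x l) - mean_load n x"

definition shape_zero :: "nat \<Rightarrow> (nat \<Rightarrow> nat) \<Rightarrow> bool" where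
  "shape_zero n x \<longleftrightarrow> (\<forall>l\<in>{1..n}. shape n x l = 0)"

text \<open>Probability that the next arriving item (embedded chain) is stored at node l
  when the configuration is x.\<close>

definition route_prob ::
  "nat \<Rightarrow> (nat \<Rightarrow> nat) \<Rightarrow> (nat \<Rightarrow> nat \<Rightarrow> nat) \<Rightarrow> (nat \<Rightarrow> real)
   \<Rightarrow> ((nat \<Rightarrow> nat) \<Rightarrow> nat \<Rightarrow> nat \<Rightarrow> real) \<Rightarrow> (nat \<Rightarrow> nat) \<Rightarrow> nat \<Rightarrow> real" where
  "route_prob K kappa s lam p x l =
     (\<Sum>i=1..K. lam i * (\<Sum>j=1..kappa i. p x i j * (if l = s i j then 1 else 0)))"

text \<open>survive ... m x = P(tau > m | X^e(0) = x), i.e. the probability that the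
  shapes at arrival moments 1..m are all nonzero.\<close>

fun survive ::
  "nat \<Rightarrow> nat \<Rightarrow> (nat \<Rightarrow> nat) \<Rightarrow> (nat \<Rightarrow> nat \<Rightarrow> nat) \<Rightarrow> (nat \<Rightarrow> real)
   \<Rightarrow> ((nat \<Rightarrow> nat) \<Rightarrow> nat \<Rightarrow> nat \<Rightarrow> real) \<Rightarrow> nat \<Rightarrow> (nat \<Rightarrow> nat) \<Rightarrow> real" where
  "survive n K kappa s lam p 0 x = 1"
| "survive n K kappa s lam p (Suc m) x =
     (\<Sum>l=1..n. route_prob K kappa s lam p x l *
        (let x' = x(l := Suc (x l)) in
          if shape_zero n x' then 0 else survive n K kappa s lam p m x'))"

text \<open>Recurrence: P(tau < infinity | start) = lim_m P(tau <= m | start) = 1 for every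
  initial configuration (equivalently every initial shape, by shift invariance).\<close>

definition recurrent ::
  "nat \<Rightarrow> nat \<Rightarrow> (nat \<Rightarrow> nat) \<Rightarrow> (nat \<Rightarrow> nat \<Rightarrow> nat) \<Rightarrow> (nat \<Rightarrow> real)
   \<Rightarrow> ((nat \<Rightarrow> nat) \<Rightarrow> nat \<Rightarrow> nat \<Rightarrow> real) \<Rightarrow> bool" where
  "recurrent n K kappa s lam p \<longleftrightarrow>
     (\<forall>x. (\<lambda>m. 1 - survive n K kappa s lam p m x) \<longlonglongrightarrow> 1)"

end

theory Submission
  imports Defs "HOL-Analysis.Analysis"
begin


definition colsum :: "nat \<Rightarrow> (nat \<Rightarrow> nat) \<Rightarrow> (nat \<Rightarrow> nat \<Rightarrow> nat) \<Rightarrow> (nat \<times> nat \<Rightarrow> real) \<Rightarrow> nat \<Rightarrow> real" where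
  "colsum K kappa s a l = (\<Sum>i=1..K. \<Sum>j=1..kappa i. a (i,j) * (if l = s i j then 1 else 0))"

definition PP :: "nat \<Rightarrow> (nat \<Rightarrow> nat) \<Rightarrow> (nat \<Rightarrow> real) \<Rightarrow> (nat \<times> nat \<Rightarrow> real) set" where
  "PP K kappa lam = {a. (\<forall>k. 0 \<le> a k \<and> a k \<le> 1) \<and> (\<forall>i\<in>{1..K}. (\<Sum>j=1..kappa i. a (i,j)) = lam i)}"

lemma colsum_lin:
  "colsum K kappa s (\<lambda>k. u * a k + v * b k) l = u * colsum K kappa s a l + v * colsum K kappa s b l"
  by (simp add: colsum_def sum.distrib sum_distrib_left algebra_simps)

lemma PP_convex:
  assumes "a \<in> PP K kappa lam" "b \<in> PP K kappa lam" "0 \<le> t" "t \<le> 1"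
  shows "(\<lambda>k. (1 - t) * a k + t * b k) \<in> PP K kappa lam"
proof -
  have "\<forall>k. 0 \<le> (1 - t) * a k + t * b k \<and> (1 - t) * a k + t * b k \<le> 1"
  proof
    fix k
    have a: "0 \<le> a k" "a k \<le> 1" and b: "0 \<le> b k" "b k \<le> 1" using assms(1,2) unfolding PP_def by blast+
    have "(1 - t) * a k \<le> (1 - t)" using a assms(4) by (simp add: mult_left_le)
    moreover have "t * b k \<le> t" using b assms(3) by (simp add: mult_left_le)
    ultimately show "0 \<le> (1 - t) * a k + t * b k \<and> (1 - t) * a k + t * b k \<le> 1"
      using a b assms(3,4) by auto
  qed
  moreover have "\<forall>i\<in>{1..K}. (\<Sum>j=1..kappa i. (1 - t) * a (i,j) + t * b (i,j)) = lam i"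
  proof
    fix i assume i: "i \<in> {1..K}"
    have "(\<Sum>j=1..kappa i. (1 - t) * a (i,j) + t * b (i,j)) = (1 - t) * (\<Sum>j=1..kappa i. a (i,j)) + t * (\<Sum>j=1..kappa i. b (i,j))"
      by (simp add: sum.distrib sum_distrib_left)
    also have "\<dots> = lam i" using assms(1,2) i unfolding PP_def by (simp add: algebra_simps)
    finally show "(\<Sum>j=1..kappa i. (1 - t) * a (i,j) + t * b (i,j)) = lam i" .
  qed
  ultimately show ?thesis by (simp add: PP_def)
qed

lemma PP_compact: "compact (PP K kappa lam)"
proof -
  have box: "compact (PiE UNIV (\<lambda>_::nat\<times>nat. {0..1::real}))"
    using compactin_PiE[of "\<lambda>_. euclidean" UNIV "\<lambda>_::nat\<times>nat. {0..1::real}"]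
    by (simp add: euclidean_product_topology)
  have cl: "closed {a::nat\<times>nat\<Rightarrow>real. \<forall>i\<in>{1..K}. (\<Sum>j=1..kappa i. a (i,j)) = lam i}"
    apply (simp only: Collect_ball_eq)
    apply (intro closed_INT ballI closed_Collect_eq)
     apply (intro continuous_intros continuous_on_product_coordinates)
    apply (intro continuous_intros)
    done
  have "PP K kappa lam = PiE UNIV (\<lambda>_. {0..1}) \<inter> {a. \<forall>i\<in>{1..K}. (\<Sum>j=1..kappa i. a (i,j)) = lam i}"
    by (auto simp: PP_def)
  then show ?thesis using box cl by auto
qed

lemma quad_arg:
  fixes D E :: real
  assumes "\<And>t. 0 < t \<Longrightarrow> t \<le> 1 \<Longrightarrow> 0 \<le> 2 * t * D + t^2 * E"
  shows "0 \<le> D"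
proof (rule ccontr)
  assume "\<not> 0 \<le> D" hence D: "D < 0" by simp
  have E: "E > 0"
  proof (rule ccontr)
    assume "\<not> E > 0"
    hence "2 * 1 * D + 1^2 * E < 0" using D by simp
    with assms[of 1] show False by simp
  qed
  define t where "t = min 1 (- D / E)"
  have t0: "0 < t" using D E by (auto simp: t_def intro: divide_neg_pos)
  have t1: "t \<le> 1" by (simp add: t_def)
  have tE: "t * E \<le> - D" using E by (simp add: t_def min_def field_simps split: if_splits)
  have "2 * t * D + t^2 * E = t * (2 * D + t * E)" by (simp add: power2_eq_square algebra_simps)
  also have "\<dots> < 0" using t0 tE D by (intro mult_pos_neg) auto
  finally show False using assms[OF t0 t1] by simp
qed

lemma separation:
  assumes "\<forall>i\<in>{1..K}. kappa i \<ge> 1" "\<forall>i\<in>{1..K}. 0 \<le> lam i \<and> lam i \<le> 1"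
  shows "(\<exists>a\<in>PP K kappa lam. \<forall>l\<in>{1..n}. colsum K kappa s a l = 1 / real n) \<or>
         (\<exists>d \<epsilon>. \<epsilon> > 0 \<and> (\<forall>a\<in>PP K kappa lam.
             (\<Sum>l=1..n. d l) / real n + \<epsilon> \<le> (\<Sum>l=1..n. d l * colsum K kappa s a l)))"
proof -
  define f where "f a = (\<Sum>l=1..n. (colsum K kappa s a l - 1 / real n)^2)" for a
  define a0 :: "nat\<times>nat \<Rightarrow> real" where "a0 = (\<lambda>(i,j). if j = 1 \<and> i \<in> {1..K} then lam i else 0)"
  have "a0 \<in> PP K kappa lam"
  proof -
    have "\<forall>k. 0 \<le> a0 k \<and> a0 k \<le> 1" using assms(2) by (auto simp: a0_def)
    moreover have "(\<Sum>j=1..kappa i. a0 (i,j)) = lam i" if "i \<in> {1..K}" for i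
    proof -
      have "(\<Sum>j=1..kappa i. a0 (i,j)) = (\<Sum>j=1..kappa i. if j = 1 then lam i else 0)"
        using that by (intro sum.cong) (auto simp: a0_def)
      also have "\<dots> = lam i" using assms(1) that by (simp add: sum.delta)
      finally show ?thesis .
    qed
    ultimately show ?thesis by (simp add: PP_def)
  qed
  hence ne: "PP K kappa lam \<noteq> {}" by auto
  have cont: "continuous_on (PP K kappa lam) f"
    unfolding f_def colsum_def
    by (rule continuous_on_subset[of UNIV]) (intro continuous_intros continuous_on_product_coordinates, simp)
  obtain a where a: "a \<in> PP K kappa lam" and amin: "\<And>b. b \<in> PP K kappa lam \<Longrightarrow> f a \<le> f b"
    using continuous_attains_inf[OF PP_compact ne cont] by blast
  show ?thesis
  proof (cases "f a = 0")
    case True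
    have "\<forall>l\<in>{1..n}. (colsum K kappa s a l - 1 / real n)^2 = 0"
      using True unfolding f_def by (subst (asm) sum_nonneg_eq_0_iff) auto
    hence "\<forall>l\<in>{1..n}. colsum K kappa s a l = 1 / real n" by simp
    with a show ?thesis by blast
  next
    case False
    define d where "d l = colsum K kappa s a l - 1 / real n" for l
    have fpos: "f a > 0" using False unfolding f_def by (metis False f_def order_le_less sum_nonneg zero_le_power2)
    have key: "0 \<le> (\<Sum>l=1..n. d l * (colsum K kappa s b l - colsum K kappa s a l))" if b: "b \<in> PP K kappa lam" for b
    proof (rule quad_arg)
      fix t :: real assume t: "0 < t" "t \<le> 1"
      define e where "e l = colsum K kappa s b l - colsum K kappa s a l" for l
      have "f a \<le> f (\<lambda>k. (1 - t) * a k + t * b k)" using PP_convex[OF a b] t by (intro amin) auto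
      also have "\<dots> = (\<Sum>l=1..n. (d l + t * e l)^2)"
        unfolding f_def colsum_lin d_def e_def by (intro sum.cong) (auto simp: algebra_simps)
      also have "\<dots> = f a + 2 * t * (\<Sum>l=1..n. d l * e l) + t^2 * (\<Sum>l=1..n. (e l)^2)"
        unfolding f_def d_def[symmetric]
        by (simp add: power2_eq_square algebra_simps sum.distrib sum_distrib_left)
      finally show "0 \<le> 2 * t * (\<Sum>l=1..n. d l * (colsum K kappa s b l - colsum K kappa s a l)) + t^2 * (\<Sum>l=1..n. (e l)^2)"
        unfolding e_def by simp
    qed
    show ?thesis
    proof (intro disjI2 exI conjI ballI)
      show "f a > 0" by (rule fpos)
      fix b assume b: "b \<in> PP K kappa lam"
      have "(\<Sum>l=1..n. d l * colsum K kappa s a l) = (\<Sum>l=1..n. (d l)^2 + d l * (1 / real n))"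
      proof (intro sum.cong refl)
        fix l
        have "\<And>c r::real. (c - r) * c = (c - r)^2 + (c - r) * r" by algebra
        then show "d l * colsum K kappa s a l = (d l)^2 + d l * (1 / real n)" unfolding d_def .
      qed
      also have "\<dots> = f a + (\<Sum>l=1..n. d l) / real n"
        unfolding f_def d_def[symmetric] by (simp add: sum.distrib sum_divide_distrib)
      finally have "(\<Sum>l=1..n. d l) / real n + f a = (\<Sum>l=1..n. d l * colsum K kappa s a l)" by simp
      also have "\<dots> \<le> (\<Sum>l=1..n. d l * colsum K kappa s b l)"
        using key[OF b] by (simp add: algebra_simps sum_subtractf)
      finally show "(\<Sum>l=1..n. d l) / real n + f a \<le> (\<Sum>l=1..n. d l * colsum K kappa s b l)" .
    qed
  qed
qed



lemma exp_le_quad: fixes y :: real assumes "\<bar>y\<bar> \<le> 1" shows "exp y \<le> 1 + y + y^2"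
proof (cases "0 \<le> y")
  case True thus ?thesis using exp_bound assms by auto
next
  case False
  have "1 - y \<le> exp (-y)" using exp_ge_add_one_self[of "-y"] by simp
  hence "exp y * (1 - y) \<le> exp y * exp (-y)" by (intro mult_left_mono) auto
  hence e: "exp y * (1 - y) \<le> 1" by (simp add: exp_minus_inverse)
  have eq: "(1 + y + y^2) * (1 - y) = 1 - y * (y * y)" by (simp add: power2_eq_square algebra_simps)
  have "y * (y * y) \<le> 0" using False by (intro mult_nonpos_nonneg) auto
  hence "1 \<le> (1 + y + y^2) * (1 - y)" using eq by linarith
  with e have "exp y * (1 - y) \<le> (1 + y + y^2) * (1 - y)" by linarith
  thus ?thesis using False by (simp add: mult_le_cancel_right)
qed

lemma sm_facts:
  assumes "storage_model n K kappa s lam"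
  shows "n \<ge> 1" "\<And>i. i \<in> {1..K} \<Longrightarrow> 0 < lam i \<and> lam i \<le> 1"
    "\<And>i j. i \<in> {1..K} \<Longrightarrow> j \<in> {1..kappa i} \<Longrightarrow> s i j \<in> {1..n}"
    "\<forall>i\<in>{1..K}. kappa i \<ge> 1" "(\<Sum>i=1..K. lam i) = 1"
proof -
  have K: "K \<ge> 1" and k: "\<forall>i\<in>{1..K}. kappa i \<ge> 1" and sr: "\<forall>i\<in>{1..K}. \<forall>j\<in>{1..kappa i}. s i j \<in> {1..n}"
    and lp: "\<forall>i\<in>{1..K}. lam i > 0" and ls: "(\<Sum>i=1..K. lam i) = 1"
    using assms unfolding storage_model_def by auto
  show "\<forall>i\<in>{1..K}. kappa i \<ge> 1" "(\<Sum>i=1..K. lam i) = 1" by fact+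
  have "s 1 1 \<in> {1..n}" using K k sr by auto
  thus "n \<ge> 1" by auto
  show "\<And>i j. i \<in> {1..K} \<Longrightarrow> j \<in> {1..kappa i} \<Longrightarrow> s i j \<in> {1..n}" using sr by auto
  fix i assume i: "i \<in> {1..K}"
  have "lam i \<le> (\<Sum>i=1..K. lam i)" using i lp by (intro member_le_sum) (auto simp: less_imp_le)
  thus "0 < lam i \<and> lam i \<le> 1" using ls lp i by auto
qed

lemma route_facts:
  assumes sm: "storage_model n K kappa s lam" and rp: "routing_policy n K kappa p"
  shows "\<And>l. 0 \<le> route_prob K kappa s lam p x l"
    "(\<Sum>l=1..n. route_prob K kappa s lam p x l) = 1"
    "(\<lambda>(i,j). if i \<in> {1..K} \<and> j \<in> {1..kappa i} then lam i * p x i j else 0) \<in> PP K kappa lam"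
    "\<And>l. route_prob K kappa s lam p x l =
       colsum K kappa s (\<lambda>(i,j). if i \<in> {1..K} \<and> j \<in> {1..kappa i} then lam i * p x i j else 0) l"
proof -
  note F = sm_facts[OF sm]
  have pn: "\<And>i j. i \<in> {1..K} \<Longrightarrow> j \<in> {1..kappa i} \<Longrightarrow> 0 \<le> p x i j"
    and ps: "\<And>i. i \<in> {1..K} \<Longrightarrow> (\<Sum>j=1..kappa i. p x i j) = 1"
    using rp unfolding routing_policy_def by auto
  have p1: "p x i j \<le> 1" if "i \<in> {1..K}" "j \<in> {1..kappa i}" for i j
  proof -
    have "p x i j \<le> (\<Sum>j=1..kappa i. p x i j)" using that pn by (intro member_le_sum) auto
    thus ?thesis using ps that by simp
  qed
  show "\<And>l. 0 \<le> route_prob K kappa s lam p x l"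
    unfolding route_prob_def using F(2) pn
    by (intro sum_nonneg mult_nonneg_nonneg) (auto simp: less_imp_le)
  have "(\<Sum>l=1..n. route_prob K kappa s lam p x l)
      = (\<Sum>l=1..n. \<Sum>i=1..K. \<Sum>j=1..kappa i. lam i * (p x i j * (if l = s i j then 1 else 0)))"
    unfolding route_prob_def by (simp add: sum_distrib_left)
  also have "\<dots> = (\<Sum>i=1..K. \<Sum>l=1..n. \<Sum>j=1..kappa i. lam i * (p x i j * (if l = s i j then 1 else 0)))"
    by (rule sum.swap)
  also have "\<dots> = (\<Sum>i=1..K. \<Sum>j=1..kappa i. \<Sum>l=1..n. lam i * (p x i j * (if l = s i j then 1 else 0)))"
    by (intro sum.cong refl sum.swap)
  also have "\<dots> = (\<Sum>i=1..K. \<Sum>j=1..kappa i. lam i * p x i j)"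
  proof (intro sum.cong refl)
    fix i j assume "i \<in> {1..K}" "j \<in> {1..kappa i}"
    hence "s i j \<in> {1..n}" using F(3) by auto
    thus "(\<Sum>l=1..n. lam i * (p x i j * (if l = s i j then 1 else 0))) = lam i * p x i j"
      by (simp add: if_distrib cong: if_cong)
  qed
  also have "\<dots> = (\<Sum>i=1..K. lam i * (\<Sum>j=1..kappa i. p x i j))" by (simp add: sum_distrib_left)
  also have "\<dots> = 1" using ps F(5) by simp
  finally show "(\<Sum>l=1..n. route_prob K kappa s lam p x l) = 1" .
  show "(\<lambda>(i,j). if i \<in> {1..K} \<and> j \<in> {1..kappa i} then lam i * p x i j else 0) \<in> PP K kappa lam"
    unfolding PP_def
  proof (intro CollectI conjI allI ballI)
    fix k :: "nat \<times> nat"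
    obtain i j where k: "k = (i,j)" by fastforce
    show "0 \<le> (case k of (i,j) \<Rightarrow> if i \<in> {1..K} \<and> j \<in> {1..kappa i} then lam i * p x i j else 0)"
      using F(2) pn by (auto simp: k less_imp_le)
    show "(case k of (i,j) \<Rightarrow> if i \<in> {1..K} \<and> j \<in> {1..kappa i} then lam i * p x i j else 0) \<le> 1"
      using F(2) pn p1 by (auto simp: k intro: mult_le_one less_imp_le)
  next
    fix i assume i: "i \<in> {1..K}"
    have "(\<Sum>j=1..kappa i. (case (i,j) of (i,j) \<Rightarrow> if i \<in> {1..K} \<and> j \<in> {1..kappa i} then lam i * p x i j else 0))
       = (\<Sum>j=1..kappa i. lam i * p x i j)" using i by (intro sum.cong) auto
    also have "\<dots> = lam i" using ps[OF i] by (simp add: sum_distrib_left[symmetric])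
    finally show "(\<Sum>j=1..kappa i. (case (i,j) of (i,j) \<Rightarrow> if i \<in> {1..K} \<and> j \<in> {1..kappa i} then lam i * p x i j else 0)) = lam i" .
  qed
  fix l
  show "route_prob K kappa s lam p x l =
       colsum K kappa s (\<lambda>(i,j). if i \<in> {1..K} \<and> j \<in> {1..kappa i} then lam i * p x i j else 0) l"
    unfolding route_prob_def colsum_def
    by (intro sum.cong refl) (auto simp: sum_distrib_left intro!: sum.cong)
qed

lemma g_step:
  fixes d :: "nat \<Rightarrow> real"
  assumes n: "n \<ge> 1" and l: "l \<in> {1..n}"
  shows "(\<Sum>k=1..n. d k * shape n (x(l := Suc (x l))) k)
       = (\<Sum>k=1..n. d k * shape n x k) + (d l - (\<Sum>k=1..n. d k) / real n)"
proof -
  define x' where "x' = x(l := Suc (x l))"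
  have "(\<Sum>k=1..n. real (x' k)) = (\<Sum>k=1..n. real (x k) + (if k = l then 1 else 0))"
    by (intro sum.cong) (auto simp: x'_def)
  also have "\<dots> = (\<Sum>k=1..n. real (x k)) + 1" using l by (simp add: sum.distrib)
  finally have "mean_load n x' = mean_load n x + 1 / real n"
    unfolding mean_load_def by (simp add: add_divide_distrib)
  hence sh: "shape n x' k = shape n x k + (if k = l then 1 else 0) - 1 / real n" for k
    unfolding shape_def by (auto simp: x'_def)
  have "(\<Sum>k=1..n. d k * shape n x' k) = (\<Sum>k=1..n. d k * shape n x k + (if k = l then d k else 0) - d k * (1 / real n))"
    unfolding sh by (intro sum.cong) (auto simp: algebra_simps)
  also have "\<dots> = (\<Sum>k=1..n. d k * shape n x k) + d l - (\<Sum>k=1..n. d k) * (1 / real n)"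
    using l by (simp add: sum.distrib sum_subtractf sum_divide_distrib)
  finally show ?thesis unfolding x'_def by simp
qed

lemma no_recur:
  assumes sm: "storage_model n K kappa s lam" and rp: "routing_policy n K kappa p"
    and eps: "\<epsilon> > 0"
    and sep: "\<forall>a\<in>PP K kappa lam. (\<Sum>l=1..n. d l) / real n + \<epsilon> \<le> (\<Sum>l=1..n. d l * colsum K kappa s a l)"
  shows "\<not> recurrent n K kappa s lam p"
proof
  assume rec: "recurrent n K kappa s lam p"
  note F = sm_facts[OF sm]
  define V where "V = (\<Sum>l=1..n. d l)"
  define D where "D l = d l - V / real n" for l
  define g where "g x = (\<Sum>k=1..n. d k * shape n x k)" for x
  define r where "r x l = route_prob K kappa s lam p x l" for x l
  note RF = route_facts[OF sm rp]
  have rnn: "\<And>x l. 0 \<le> r x l" and rs: "\<And>x. (\<Sum>l=1..n. r x l) = 1"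
    using RF unfolding r_def by auto
  have gstep: "\<And>x l. l \<in> {1..n} \<Longrightarrow> g (x(l := Suc (x l))) = g x + D l"
    unfolding g_def D_def V_def using g_step[OF F(1)] by blast
  have drift: "\<epsilon> \<le> (\<Sum>l=1..n. r x l * D l)" for x
  proof -
    have "V / real n + \<epsilon> \<le> (\<Sum>l=1..n. d l * r x l)"
      using sep RF(3)[of x] unfolding V_def r_def RF(4)[of x] by blast
    moreover have "(\<Sum>l=1..n. r x l * D l) = (\<Sum>l=1..n. d l * r x l) - V / real n * (\<Sum>l=1..n. r x l)"
      unfolding D_def by (simp add: algebra_simps sum_subtractf sum_distrib_left)
    ultimately show ?thesis using rs[of x] by simp
  qed
  define B where "B = 1 + \<epsilon> + (\<Sum>l=1..n. \<bar>D l\<bar>)"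
  have Bge: "1 + \<epsilon> \<le> B" unfolding B_def by (simp add: sum_nonneg)
  have hD: "\<bar>D l\<bar> \<le> B" if "l \<in> {1..n}" for l
  proof -
    have "\<bar>D l\<bar> \<le> (\<Sum>l=1..n. \<bar>D l\<bar>)" using that by (intro member_le_sum) auto
    thus ?thesis unfolding B_def using eps by simp
  qed
  define \<theta> where "\<theta> = \<epsilon> / B^2"
  have Bpos: "B > 0" using Bge eps by simp
  have th0: "\<theta> > 0" using eps Bpos by (simp add: \<theta>_def)
  have thB: "\<theta> * B \<le> 1"
  proof -
    have "\<theta> * B = \<epsilon> / B" using Bpos by (simp add: \<theta>_def power2_eq_square)
    also have "\<dots> \<le> 1" using Bge Bpos by simp
    finally show ?thesis .
  qed
  have thBB: "\<theta>^2 * B^2 = \<theta> * \<epsilon>" using Bpos by (simp add: \<theta>_def power2_eq_square)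
  have expb: "(\<Sum>l=1..n. r x l * exp (- \<theta> * D l)) \<le> 1" for x
  proof -
    have each: "r x l * exp (- \<theta> * D l) \<le> r x l * (1 + (- \<theta> * D l) + (\<theta>^2 * (D l)^2))" if l: "l \<in> {1..n}" for l
    proof -
      have "\<bar>- \<theta> * D l\<bar> \<le> \<theta> * B" using hD[OF l] th0 by (simp add: abs_mult mult_left_mono)
      hence "exp (- \<theta> * D l) \<le> 1 + (- \<theta> * D l) + (- \<theta> * D l)^2" using thB by (intro exp_le_quad) simp
      thus ?thesis using rnn[of x l] by (intro mult_left_mono) (auto simp: power_mult_distrib)
    qed
    have sq: "(\<Sum>l=1..n. r x l * (D l)^2) \<le> (\<Sum>l=1..n. r x l * B^2)"
    proof (intro sum_mono mult_left_mono)
      fix l assume l: "l \<in> {1..n}"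
      show "(D l)^2 \<le> B^2" using hD[OF l] by (simp add: abs_le_square_iff[symmetric] abs_of_pos Bpos)
    qed (rule rnn)
    have "(\<Sum>l=1..n. r x l * exp (- \<theta> * D l)) \<le> (\<Sum>l=1..n. r x l * (1 + (- \<theta> * D l) + (\<theta>^2 * (D l)^2)))"
      using each by (rule sum_mono)
    also have "\<dots> = (\<Sum>l=1..n. r x l) - \<theta> * (\<Sum>l=1..n. r x l * D l) + \<theta>^2 * (\<Sum>l=1..n. r x l * (D l)^2)"
      by (simp add: algebra_simps sum.distrib sum_subtractf sum_distrib_left)
    also have "\<dots> \<le> 1 - \<theta> * \<epsilon> + \<theta>^2 * B^2"
    proof -
      have "\<theta> * \<epsilon> \<le> \<theta> * (\<Sum>l=1..n. r x l * D l)" using drift[of x] th0 by (simp add: mult_left_mono)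
      moreover have "\<theta>^2 * (\<Sum>l=1..n. r x l * (D l)^2) \<le> \<theta>^2 * B^2"
        using sq rs[of x] by (simp add: sum_distrib_right[symmetric] mult_left_mono)
      ultimately show ?thesis using rs[of x] by linarith
    qed
    also have "\<dots> = 1" using thBB by simp
    finally show ?thesis .
  qed
  have zero_g: "shape_zero n x \<Longrightarrow> g x = 0" for x unfolding shape_zero_def g_def by simp
  have main: "1 - survive n K kappa s lam p m x \<le> exp (- \<theta> * g x)" for m x
  proof (induction m arbitrary: x)
    case 0 thus ?case by simp
  next
    case (Suc m)
    define h where "h l = (let x' = x(l := Suc (x l)) in if shape_zero n x' then 0 else survive n K kappa s lam p m x')" for l
    have "1 - survive n K kappa s lam p (Suc m) x = (\<Sum>l=1..n. r x l * (1 - h l))"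
      using rs[of x] by (simp add: r_def h_def sum_subtractf algebra_simps)
    also have "\<dots> \<le> (\<Sum>l=1..n. r x l * (exp (- \<theta> * g x) * exp (- \<theta> * D l)))"
    proof (intro sum_mono mult_left_mono rnn)
      fix l assume l: "l \<in> {1..n}"
      have e: "exp (- \<theta> * g (x(l := Suc (x l)))) = exp (- \<theta> * g x) * exp (- \<theta> * D l)"
        using gstep[OF l] by (simp add: algebra_simps mult_exp_exp)
      show "1 - h l \<le> exp (- \<theta> * g x) * exp (- \<theta> * D l)"
      proof (cases "shape_zero n (x(l := Suc (x l)))")
        case True thus ?thesis using e zero_g[OF True] by (simp add: h_def Let_def)
      next
        case False
        have "h l = survive n K kappa s lam p m (x(l := Suc (x l)))" using False by (simp add: h_def Let_def)
        with e Suc.IH[of "x(l := Suc (x l))"] show ?thesis by linarith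
      qed
    qed
    also have "\<dots> = exp (- \<theta> * g x) * (\<Sum>l=1..n. r x l * exp (- \<theta> * D l))"
      by (simp add: sum_distrib_left algebra_simps)
    also have "\<dots> \<le> exp (- \<theta> * g x)" using expb[of x] by (simp add: mult_left_le)
    finally show ?case .
  qed
  have "\<exists>l\<in>{1..n}. D l > 0"
  proof (rule ccontr)
    assume "\<not> ?thesis"
    hence "(\<Sum>l=1..n. r (\<lambda>_. 0) l * D l) \<le> 0"
      by (intro sum_nonpos mult_nonneg_nonpos rnn) (auto simp: not_less)
    thus False using drift[of "\<lambda>_. 0"] eps by simp
  qed
  then obtain l0 where l0: "l0 \<in> {1..n}" "D l0 > 0" by blast
  define x0 :: "nat \<Rightarrow> nat" where "x0 = (\<lambda>_. 0)(l0 := Suc ((\<lambda>_. 0) l0))"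
  have "g (\<lambda>_. 0) = 0" unfolding g_def shape_def mean_load_def by simp
  hence gx0: "g x0 = D l0" using gstep[OF l0(1), of "\<lambda>_. 0"] unfolding x0_def by simp
  have lt: "exp (- \<theta> * g x0) < 1" using gx0 l0(2) th0 by simp
  have "(\<lambda>m. 1 - survive n K kappa s lam p m x0) \<longlonglongrightarrow> 1" using rec unfolding recurrent_def by blast
  hence "1 \<le> exp (- \<theta> * g x0)" by (rule LIMSEQ_le_const2) (use main in blast)
  thus False using lt by simp
qed


theorem theorem2p2:
  fixes n K :: nat and kappa :: "nat \<Rightarrow> nat" and s :: "nat \<Rightarrow> nat \<Rightarrow> nat"
    and lam :: "nat \<Rightarrow> real"
  assumes "storage_model n K kappa s lam"
    and "\<exists>p. routing_policy n K kappa p \<and> recurrent n K kappa s lam p"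
  shows "\<exists>\<alpha> :: nat \<Rightarrow> nat \<Rightarrow> real.
           (\<forall>i\<in>{1..K}. \<forall>j\<in>{1..kappa i}. \<alpha> i j \<ge> 0) \<and>
           (\<forall>i\<in>{1..K}. (\<Sum>j=1..kappa i. \<alpha> i j) = lam i) \<and>
           (\<forall>l\<in>{1..n}. (\<Sum>i=1..K. \<Sum>j=1..kappa i. \<alpha> i j * (if l = s i j then 1 else 0))
                         = 1 / real n)"
proof -
  obtain p where rp: "routing_policy n K kappa p" and rec: "recurrent n K kappa s lam p"
    using assms(2) by blast
  note F = sm_facts[OF assms(1)]
  have lb: "\<forall>i\<in>{1..K}. 0 \<le> lam i \<and> lam i \<le> 1" using F(2) by (auto simp: less_imp_le)
  from separation[OF F(4) lb, of n s] show ?thesis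
  proof
    assume "\<exists>a\<in>PP K kappa lam. \<forall>l\<in>{1..n}. colsum K kappa s a l = 1 / real n"
    then obtain a where a: "a \<in> PP K kappa lam" and c: "\<forall>l\<in>{1..n}. colsum K kappa s a l = 1 / real n"
      by blast
    show ?thesis
    proof (intro exI[of _ "\<lambda>i j. a (i,j)"] conjI)
      show "\<forall>i\<in>{1..K}. \<forall>j\<in>{1..kappa i}. 0 \<le> a (i,j)" using a unfolding PP_def by blast
      show "\<forall>i\<in>{1..K}. (\<Sum>j=1..kappa i. a (i,j)) = lam i" using a unfolding PP_def by blast
      show "\<forall>l\<in>{1..n}. (\<Sum>i=1..K. \<Sum>j=1..kappa i. a (i,j) * (if l = s i j then 1 else 0)) = 1 / real n"
        using c unfolding colsum_def by blast
    qed
  next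
    assume "\<exists>d \<epsilon>. \<epsilon> > 0 \<and> (\<forall>a\<in>PP K kappa lam.
             (\<Sum>l=1..n. d l) / real n + \<epsilon> \<le> (\<Sum>l=1..n. d l * colsum K kappa s a l))"
    then obtain d \<epsilon> where "\<epsilon> > 0" "\<forall>a\<in>PP K kappa lam.
             (\<Sum>l=1..n. d l) / real n + \<epsilon> \<le> (\<Sum>l=1..n. d l * colsum K kappa s a l)" by blast
    from no_recur[OF assms(1) rp this] rec show ?thesis by contradiction
  qed
qed

end
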